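(* Let $P$ be a poset, $f$ a downward closure operator on $P$, and $x,y\in P$ with $x<y$. Assume $f^{-1}(x)=\{x\}$. Then \[ |(x,y)_P|\simeq\begin{cases}|(x,y)_{\operatorname{Fix} f}| & \text{if } y\in\operatorname{Fix} f,\\ \mathrm{pt} & \text{otherwise.}\end{cases}\]
   Context: A downward closure operator on a poset $P$ is an order-preserving map $f:P\to P$ with $f(z)\le z$ for all $z\in P$ and $f\circ f=f$. $\operatorname{Fix} f=\{z\in P: f(z)=z\}$, regarded as a poset with the restricted order. For a poset $Q$, $|Q|$ is the geometric realization of its order complex (simplices are finite nonempty chains), and $(x,y)_Q=\{z\in Q:x<z<y\}$. $\simeq$ denotes homotopy equivalence and $\mathrm{pt}$ the one-point space. *)

theory Defs
  imports "HOL-Analysis.Analysis"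
begin

definition Fix :: "('a \<Rightarrow> 'a) \<Rightarrow> 'a set" where
  "Fix f = {z. f z = z}"

text \<open>Finite nonempty chains of a subset S of a poset (the simplices of the order complex).\<close>
definition is_simplex :: "'a::order set \<Rightarrow> 'a set \<Rightarrow> bool" where
  "is_simplex S \<sigma> \<longleftrightarrow> finite \<sigma> \<and> \<sigma> \<noteq> {} \<and> \<sigma> \<subseteq> S \<and>
     (\<forall>a\<in>\<sigma>. \<forall>b\<in>\<sigma>. a \<le> b \<or> b \<le> a)"

text \<open>Points of the geometric realization: barycentric coordinate functions whose
  support is a simplex.\<close>
definition realization_points :: "'a::order set \<Rightarrow> ('a \<Rightarrow> real) set" where
  "realization_points S = {\<alpha>. (\<forall>z. 0 \<le> \<alpha> z) \<and> is_simplex S {z. \<alpha> z \<noteq> 0} \<and>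
      (\<Sum>z\<in>{z. \<alpha> z \<noteq> 0}. \<alpha> z) = 1}"

definition closed_cell :: "'a::order set \<Rightarrow> 'a set \<Rightarrow> ('a \<Rightarrow> real) set" where
  "closed_cell S \<sigma> = {\<alpha> \<in> realization_points S. {z. \<alpha> z \<noteq> 0} \<subseteq> \<sigma>}"

text \<open>Geometric realization of the order complex of S (with the restricted order),
  carrying the weak (coherent) topology with respect to its closed simplices, each of which
  carries the Euclidean (product) topology.\<close>
definition order_realization :: "'a::order set \<Rightarrow> ('a \<Rightarrow> real) topology" where
  "order_realization S = topology (\<lambda>U. U \<subseteq> realization_points S \<and>
     (\<forall>\<sigma>. is_simplex S \<sigma> \<longrightarrow> openin (subtopology euclidean (closed_cell S \<sigma>)) (U \<inter> closed_cell S \<sigma>)))"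

lemma istopology_order_realization:
  "istopology (\<lambda>U. U \<subseteq> realization_points S \<and>
     (\<forall>\<sigma>. is_simplex S \<sigma> \<longrightarrow> openin (subtopology euclidean (closed_cell S \<sigma>)) (U \<inter> closed_cell S \<sigma>)))"
  (is "istopology ?L")
proof -
  have 1: "?L (U \<inter> V)" if "?L U" "?L V" for U V
  proof -
    have e: "U \<inter> V \<inter> closed_cell S \<sigma> = (U \<inter> closed_cell S \<sigma>) \<inter> (V \<inter> closed_cell S \<sigma>)" for \<sigma> by blast
    show ?thesis unfolding e using that by (auto intro: openin_Int)
  qed
  have 2: "?L (\<Union>K)" if K: "\<forall>U\<in>K. ?L U" for K
  proof -
    have e: "\<Union>K \<inter> closed_cell S \<sigma> = \<Union>((\<lambda>U. U \<inter> closed_cell S \<sigma>) ` K)" for \<sigma> by blast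
    have "openin (subtopology euclidean (closed_cell S \<sigma>)) (\<Union>K \<inter> closed_cell S \<sigma>)"
      if "is_simplex S \<sigma>" for \<sigma>
      unfolding e using K that by (intro openin_Union) blast
    then show ?thesis using K by blast
  qed
  show ?thesis unfolding istopology_def using 1 2 by blast
qed

lemma openin_order_realization:
  "openin (order_realization S) U \<longleftrightarrow> U \<subseteq> realization_points S \<and>
     (\<forall>\<sigma>. is_simplex S \<sigma> \<longrightarrow> openin (subtopology euclidean (closed_cell S \<sigma>)) (U \<inter> closed_cell S \<sigma>))"
  unfolding order_realization_def topology_inverse'[OF istopology_order_realization] ..

end

theory Submission
  imports Defs
begin


lemma cell_sub_rp: "closed_cell S \<sigma> \<subseteq> realization_points S"
  unfolding closed_cell_def by auto

lemma topspace_OR: "topspace (order_realization S) = realization_points S"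
proof -
  have "openin (order_realization S) (realization_points S)"
    unfolding openin_order_realization
  proof (intro conjI allI impI)
    fix \<sigma> assume "is_simplex S \<sigma>"
    have "realization_points S \<inter> closed_cell S \<sigma> = closed_cell S \<sigma>" using cell_sub_rp by blast
    then show "openin (top_of_set (closed_cell S \<sigma>)) (realization_points S \<inter> closed_cell S \<sigma>)"
      by simp
  qed simp
  then have "realization_points S \<subseteq> topspace (order_realization S)" by (rule openin_subset)
  moreover have "topspace (order_realization S) \<subseteq> realization_points S"
    using openin_order_realization openin_topspace by blast
  ultimately show ?thesis by blast
qed

lemma rp_in_own_cell:
  assumes "\<alpha> \<in> realization_points S"
  shows "is_simplex S {z. \<alpha> z \<noteq> 0}" "\<alpha> \<in> closed_cell S {z. \<alpha> z \<noteq> 0}"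
  using assms unfolding realization_points_def closed_cell_def by auto

lemma coord_cont: "continuous_on A (\<lambda>\<alpha>::'a \<Rightarrow> real. \<alpha> z)"
  by (rule continuous_on_subset[OF continuous_on_product_coordinates]) simp

lemma cell_eq:
  assumes "is_simplex S \<rho>"
  shows "closed_cell S \<rho> = {\<alpha>. (\<forall>z. 0 \<le> \<alpha> z) \<and> (\<forall>z. z \<notin> \<rho> \<longrightarrow> \<alpha> z = 0) \<and> sum \<alpha> \<rho> = 1}"
proof (intro set_eqI iffI)
  fix \<alpha> assume a: "\<alpha> \<in> closed_cell S \<rho>"
  then have s: "{z. \<alpha> z \<noteq> 0} \<subseteq> \<rho>" and rp: "\<alpha> \<in> realization_points S"
    unfolding closed_cell_def by auto
  have "sum \<alpha> \<rho> = sum \<alpha> {z. \<alpha> z \<noteq> 0}"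
    using assms s by (intro sum.mono_neutral_right) (auto simp: is_simplex_def)
  then show "\<alpha> \<in> {\<alpha>. (\<forall>z. 0 \<le> \<alpha> z) \<and> (\<forall>z. z \<notin> \<rho> \<longrightarrow> \<alpha> z = 0) \<and> sum \<alpha> \<rho> = 1}"
    using rp s unfolding realization_points_def by auto
next
  fix \<alpha> :: "'a \<Rightarrow> real" assume "\<alpha> \<in> {\<alpha>. (\<forall>z. 0 \<le> \<alpha> z) \<and> (\<forall>z. z \<notin> \<rho> \<longrightarrow> \<alpha> z = 0) \<and> sum \<alpha> \<rho> = 1}"
  then have n: "\<forall>z. 0 \<le> \<alpha> z" and s: "{z. \<alpha> z \<noteq> 0} \<subseteq> \<rho>" and one: "sum \<alpha> \<rho> = 1" by auto
  have fin: "finite \<rho>" using assms by (simp add: is_simplex_def)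
  have e: "sum \<alpha> \<rho> = sum \<alpha> {z. \<alpha> z \<noteq> 0}"
    using fin s by (intro sum.mono_neutral_right) auto
  have ne: "{z. \<alpha> z \<noteq> 0} \<noteq> {}"
  proof
    assume "{z. \<alpha> z \<noteq> 0} = {}"
    then have "sum \<alpha> {z. \<alpha> z \<noteq> 0} = 0" by (simp only: sum.empty)
    with e one show False by simp
  qed
  have "is_simplex S {z. \<alpha> z \<noteq> 0}"
    using assms s ne fin finite_subset unfolding is_simplex_def by blast
  then show "\<alpha> \<in> closed_cell S \<rho>"
    unfolding closed_cell_def realization_points_def using n s e one by auto
qed

lemma cell_closed:
  assumes "is_simplex S \<rho>"
  shows "closed (closed_cell S \<rho>)"
proof -
  have c: "continuous_on UNIV (\<lambda>\<alpha>::'a \<Rightarrow> real. \<alpha> z)" for z by (rule coord_cont)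
  have 1: "closed {\<alpha>::'a\<Rightarrow>real. \<forall>z. 0 \<le> \<alpha> z}"
    by (intro closed_Collect_all closed_Collect_le continuous_on_const c)
  have 2: "closed {\<alpha>::'a\<Rightarrow>real. \<forall>z. z \<notin> \<rho> \<longrightarrow> \<alpha> z = 0}"
    by (intro closed_Collect_all closed_Collect_imp closed_Collect_eq continuous_on_const c) auto
  have 3: "closed {\<alpha>::'a\<Rightarrow>real. sum \<alpha> \<rho> = 1}"
    by (intro closed_Collect_eq continuous_on_const continuous_on_sum c)
  have "closed ({\<alpha>::'a\<Rightarrow>real. \<forall>z. 0 \<le> \<alpha> z} \<inter> {\<alpha>. \<forall>z. z \<notin> \<rho> \<longrightarrow> \<alpha> z = 0} \<inter> {\<alpha>. sum \<alpha> \<rho> = 1})"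
    using 1 2 3 by (intro closed_Int)
  moreover have "closed_cell S \<rho> = {\<alpha>::'a\<Rightarrow>real. \<forall>z. 0 \<le> \<alpha> z} \<inter> {\<alpha>. \<forall>z. z \<notin> \<rho> \<longrightarrow> \<alpha> z = 0} \<inter> {\<alpha>. sum \<alpha> \<rho> = 1}"
    using cell_eq[OF assms] by auto
  ultimately show ?thesis by simp
qed

definition region :: "'a::order set \<Rightarrow> 'a set \<Rightarrow> ('a \<Rightarrow> real) set" where
  "region T \<tau> = {\<beta> \<in> realization_points T. {z. \<beta> z \<noteq> 0} \<subseteq> \<tau>}"

lemma region_open:
  assumes fin: "finite \<tau>" and U: "openin (order_realization T) U"
  shows "\<exists>W. open W \<and> U \<inter> region T \<tau> = W \<inter> region T \<tau>"
proof -
  let ?F = "closed_cell T ` {\<rho>. \<rho> \<subseteq> \<tau> \<and> is_simplex T \<rho>}"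
  have finF: "finite ?F" using fin by simp
  have reg: "region T \<tau> = \<Union>?F"
  proof
    show "region T \<tau> \<subseteq> \<Union>?F"
    proof
      fix \<beta> assume b: "\<beta> \<in> region T \<tau>"
      then have rp: "\<beta> \<in> realization_points T" and s: "{z. \<beta> z \<noteq> 0} \<subseteq> \<tau>"
        unfolding region_def by auto
      have "{z. \<beta> z \<noteq> 0} \<in> {\<rho>. \<rho> \<subseteq> \<tau> \<and> is_simplex T \<rho>}" using rp_in_own_cell(1)[OF rp] s by simp
      then have "closed_cell T {z. \<beta> z \<noteq> 0} \<in> ?F" by (rule imageI)
      then show "\<beta> \<in> \<Union>?F" using rp_in_own_cell(2)[OF rp] by (rule UnionI)
    qed
    show "\<Union>?F \<subseteq> region T \<tau>"
    proof
      fix \<beta> assume "\<beta> \<in> \<Union>?F"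
      then obtain \<rho> where r: "\<rho> \<subseteq> \<tau>" "\<beta> \<in> closed_cell T \<rho>" by blast
      then show "\<beta> \<in> region T \<tau>" unfolding region_def closed_cell_def by blast
    qed
  qed
  have cl: "closed (C - U)" if "C \<in> ?F" for C
  proof -
    from that obtain \<rho> where r0: "\<rho> \<in> {\<rho>. \<rho> \<subseteq> \<tau> \<and> is_simplex T \<rho>}" and C: "C = closed_cell T \<rho>"
      by (rule imageE)
    from r0 have r: "\<rho> \<subseteq> \<tau>" "is_simplex T \<rho>" by simp_all
    have "\<forall>\<sigma>. is_simplex T \<sigma> \<longrightarrow> openin (top_of_set (closed_cell T \<sigma>)) (U \<inter> closed_cell T \<sigma>)"
      using U by (simp add: openin_order_realization)
    then have "openin (top_of_set C) (U \<inter> C)" using r(2) unfolding C by blast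
    then have "closedin (top_of_set C) (C - (U \<inter> C))"
      by (simp add: closedin_diff)
    moreover have "C - (U \<inter> C) = C - U" by blast
    ultimately have "closedin (top_of_set C) (C - U)" by (simp only:)
    then show ?thesis using cell_closed[OF r(2)] C closedin_closed_trans by blast
  qed
  have e1: "region T \<tau> - U = \<Union>((\<lambda>C. C - U) ` ?F)" unfolding reg by blast
  have "closed (\<Union>((\<lambda>C. C - U) ` ?F))"
  proof (rule closed_Union)
    show "finite ((\<lambda>C. C - U) ` ?F)" using finF by (rule finite_imageI)
    show "\<forall>T\<in>(\<lambda>C. C - U) ` ?F. closed T" using cl by blast
  qed
  then have clo: "closed (region T \<tau> - U)" unfolding e1 .
  have e2: "U \<inter> region T \<tau> = (- (region T \<tau> - U)) \<inter> region T \<tau>" by blast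
  have "open (- (region T \<tau> - U))" using clo by (rule open_Compl)
  then show ?thesis using e2 by (intro exI[of _ "- (region T \<tau> - U)"] conjI)
qed

lemma tube_lemma_swap:
  assumes "compact K" "open W" "K \<times> {x0} \<subseteq> W"
  shows "\<exists>X0. x0 \<in> X0 \<and> open X0 \<and> K \<times> X0 \<subseteq> W"
proof -
  let ?W = "prod.swap -` W"
  have "open ?W"
    using assms(2) by (intro open_vimage continuous_intros) 
  moreover have "{x0} \<times> K \<subseteq> ?W" using assms(3) by auto
  ultimately obtain X0 where X0: "x0 \<in> X0" "open X0" "X0 \<times> K \<subseteq> ?W"
    using Elementary_Topology.tube_lemma[OF assms(1)] by blast
  have "K \<times> X0 \<subseteq> W"
  proof
    fix p assume "p \<in> K \<times> X0"
    then obtain a b where p: "p = (a, b)" "a \<in> K" "b \<in> X0" by blast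
    then have "(b, a) \<in> X0 \<times> K" by (simp only: mem_Sigma_iff)
    then have "(b, a) \<in> ?W" by (rule subsetD[OF X0(3)])
    then show "p \<in> W" using p(1) by simp
  qed
  then show ?thesis using X0(1,2) by (intro exI[of _ X0] conjI)
qed



lemma eqI_on: "A \<inter> X = B \<inter> X \<Longrightarrow> x \<in> X \<Longrightarrow> x \<in> A \<longleftrightarrow> x \<in> B"
  by blast

lemma open_prod_weak:
  fixes U :: "(real \<times> ('a::order \<Rightarrow> real)) set"
  assumes Usub: "U \<subseteq> {0..1} \<times> realization_points S"
    and Ucell: "\<And>\<sigma>. is_simplex S \<sigma> \<Longrightarrow>
       openin (top_of_set ({0..1} \<times> closed_cell S \<sigma>)) (U \<inter> ({0..1} \<times> closed_cell S \<sigma>))"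
  shows "openin (prod_topology (top_of_set {0..1::real}) (order_realization S)) U"
  unfolding openin_prod_topology_alt
proof (intro allI impI)
  fix t0 \<alpha>0 assume t0U: "(t0, \<alpha>0) \<in> U"
  then have t0I: "t0 \<in> {0..1}" and a0rp: "\<alpha>0 \<in> realization_points S" using Usub by auto
  define \<sigma>0 where "\<sigma>0 = {z. \<alpha>0 z \<noteq> 0}"
  have s0: "is_simplex S \<sigma>0" and a0c: "\<alpha>0 \<in> closed_cell S \<sigma>0"
    using rp_in_own_cell[OF a0rp] unfolding \<sigma>0_def by auto
  obtain W where W: "open W" "U \<inter> ({0..1} \<times> closed_cell S \<sigma>0) = W \<inter> ({0..1} \<times> closed_cell S \<sigma>0)"
    using Ucell[OF s0] by (auto simp: openin_open)
  have "(t0, \<alpha>0) \<in> W" using eqI_on[OF W(2), of "(t0, \<alpha>0)"] t0U t0I a0c by simp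
  then obtain A B where AB: "open A" "open B" "(t0, \<alpha>0) \<in> A \<times> B" "A \<times> B \<subseteq> W"
    using open_prod_elim[OF W(1)] by metis
  then obtain \<delta> where \<delta>: "\<delta> > 0" "ball t0 \<delta> \<subseteq> A"
    by (meson mem_Sigma_iff openE)
  define J where "J = cball t0 (\<delta>/2) \<inter> {0..1::real}"
  have Jc: "compact J" unfolding J_def by (intro compact_Int_closed) auto
  have JA: "J \<subseteq> A" using \<delta> unfolding J_def by (auto simp: subset_iff dist_commute)
  have J0: "(t, \<alpha>0) \<in> U" if "t \<in> J" for t
  proof -
    have "(t, \<alpha>0) \<in> W" using AB JA that by blast
    moreover have "t \<in> {0..1}" using that J_def by auto
    ultimately show ?thesis using eqI_on[OF W(2), of "(t, \<alpha>0)"] a0c by simp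
  qed
  define V where "V = {\<alpha> \<in> realization_points S. \<forall>t\<in>J. (t, \<alpha>) \<in> U}"
  have Vopen: "openin (order_realization S) V"
    unfolding openin_order_realization
  proof (intro conjI allI impI)
    show "V \<subseteq> realization_points S" unfolding V_def by blast
    fix \<sigma> assume s: "is_simplex S \<sigma>"
    show "openin (top_of_set (closed_cell S \<sigma>)) (V \<inter> closed_cell S \<sigma>)"
    proof (subst openin_subopen, intro ballI)
      fix \<alpha>1 assume a1: "\<alpha>1 \<in> V \<inter> closed_cell S \<sigma>"
      obtain W1 where W1: "open W1" "U \<inter> ({0..1} \<times> closed_cell S \<sigma>) = W1 \<inter> ({0..1} \<times> closed_cell S \<sigma>)"
        using Ucell[OF s] by (auto simp: openin_open)
      have "J \<times> {\<alpha>1} \<subseteq> W1"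
      proof (rule subsetI)
        fix p assume "p \<in> J \<times> {\<alpha>1}"
        then obtain t where p: "p = (t, \<alpha>1)" "t \<in> J" by blast
        then have "(t, \<alpha>1) \<in> U" using a1 unfolding V_def by blast
        moreover have "t \<in> {0..1}" using p(2) J_def by auto
        ultimately show "p \<in> W1" using eqI_on[OF W1(2), of "(t, \<alpha>1)"] a1 p(1) by simp
      qed
      then obtain B1 where B1: "\<alpha>1 \<in> B1" "open B1" "J \<times> B1 \<subseteq> W1"
        using tube_lemma_swap[OF Jc W1(1)] by blast
      show "\<exists>T. openin (top_of_set (closed_cell S \<sigma>)) T \<and> \<alpha>1 \<in> T \<and> T \<subseteq> V \<inter> closed_cell S \<sigma>"
      proof (intro exI conjI)
        show "openin (top_of_set (closed_cell S \<sigma>)) (closed_cell S \<sigma> \<inter> B1)"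
          using B1(2) by (rule openin_open_Int)
        show "\<alpha>1 \<in> closed_cell S \<sigma> \<inter> B1" using a1 B1 by blast
        show "closed_cell S \<sigma> \<inter> B1 \<subseteq> V \<inter> closed_cell S \<sigma>"
        proof
          fix \<alpha> assume a: "\<alpha> \<in> closed_cell S \<sigma> \<inter> B1"
          have "(t, \<alpha>) \<in> U" if "t \<in> J" for t
          proof -
            have "(t, \<alpha>) \<in> W1" using B1 a that by blast
            moreover have "t \<in> {0..1}" using that J_def by auto
            ultimately show ?thesis using eqI_on[OF W1(2), of "(t, \<alpha>)"] a by simp
          qed
          moreover have "\<alpha> \<in> realization_points S" using a cell_sub_rp[of S \<sigma>] by blast
          ultimately show "\<alpha> \<in> V \<inter> closed_cell S \<sigma>" using a unfolding V_def by blast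
        qed
      qed
    qed
  qed
  show "\<exists>A V. openin (top_of_set {0..1}) A \<and> openin (order_realization S) V \<and> t0 \<in> A \<and> \<alpha>0 \<in> V \<and> A \<times> V \<subseteq> U"
  proof (intro exI conjI)
    show "openin (top_of_set {0..1}) ({0..1} \<inter> ball t0 (\<delta>/2))"
      by (rule openin_open_Int) simp
    show "t0 \<in> {0..1} \<inter> ball t0 (\<delta>/2)" using t0I \<delta> by auto
    show "\<alpha>0 \<in> V" using a0rp J0 unfolding V_def by blast
    show "({0..1} \<inter> ball t0 (\<delta>/2)) \<times> V \<subseteq> U"
    proof
      fix p assume "p \<in> ({0..1} \<inter> ball t0 (\<delta>/2)) \<times> V"
      then obtain t \<alpha> where p: "p = (t, \<alpha>)" "t \<in> {0..1}" "t \<in> ball t0 (\<delta>/2)" "\<alpha> \<in> V" by blast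
      then have "t \<in> J" unfolding J_def by auto
      then show "p \<in> U" using p V_def by blast
    qed
  qed (rule Vopen)
qed

lemma cont_criterion:
  fixes H :: "real \<times> ('a::order \<Rightarrow> real) \<Rightarrow> ('b::order \<Rightarrow> real)"
  assumes "\<And>\<sigma>. is_simplex S \<sigma> \<Longrightarrow> \<exists>\<tau>. finite \<tau> \<and> H ` ({0..1} \<times> closed_cell S \<sigma>) \<subseteq> region T \<tau>
             \<and> continuous_on ({0..1} \<times> closed_cell S \<sigma>) H"
  shows "continuous_map (prod_topology (top_of_set {0..1}) (order_realization S)) (order_realization T) H"
proof -
  have top: "topspace (prod_topology (top_of_set {0..1::real}) (order_realization S)) = {0..1} \<times> realization_points S"
    by (simp add: topspace_OR)
  have maps: "H p \<in> realization_points T" if hp: "p \<in> {0..1} \<times> realization_points S" for p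
  proof -
    obtain t \<alpha> where p: "p = (t, \<alpha>)" "t \<in> {0..1}" "\<alpha> \<in> realization_points S" using hp by blast
    obtain \<tau> where "H ` ({0..1} \<times> closed_cell S {z. \<alpha> z \<noteq> 0}) \<subseteq> region T \<tau>"
      using assms rp_in_own_cell[OF p(3)] by blast
    then show ?thesis using p rp_in_own_cell[OF p(3)] unfolding region_def by blast
  qed
  show ?thesis
    unfolding continuous_map_def
  proof (intro conjI allI impI)
    show "H \<in> topspace (prod_topology (top_of_set {0..1}) (order_realization S)) \<rightarrow> topspace (order_realization T)"
      using maps by (simp add: top topspace_OR)
    fix U assume U: "openin (order_realization T) U"
    let ?P = "{p \<in> topspace (prod_topology (top_of_set {0..1}) (order_realization S)). H p \<in> U}"
    show "openin (prod_topology (top_of_set {0..1}) (order_realization S)) ?P"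
    proof (rule open_prod_weak)
      show "?P \<subseteq> {0..1} \<times> realization_points S" using top by blast
      fix \<sigma> assume s: "is_simplex S \<sigma>"
      obtain \<tau> where \<tau>: "finite \<tau>" "H ` ({0..1} \<times> closed_cell S \<sigma>) \<subseteq> region T \<tau>"
         "continuous_on ({0..1} \<times> closed_cell S \<sigma>) H" using assms[OF s] by blast
      obtain W where W: "open W" "U \<inter> region T \<tau> = W \<inter> region T \<tau>"
        using region_open[OF \<tau>(1) U] by blast
      have "?P \<inter> ({0..1} \<times> closed_cell S \<sigma>) = ({0..1} \<times> closed_cell S \<sigma>) \<inter> H -` W"
      proof (intro set_eqI iffI)
        fix p assume hp: "p \<in> ?P \<inter> ({0..1} \<times> closed_cell S \<sigma>)"
        then have p1: "p \<in> {0..1} \<times> closed_cell S \<sigma>" and p2: "H p \<in> U" by auto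
        have "H p \<in> region T \<tau>" using \<tau>(2) p1 by blast
        then have "H p \<in> W" using W(2) p2 by blast
        then show "p \<in> ({0..1} \<times> closed_cell S \<sigma>) \<inter> H -` W" using p1 by simp
      next
        fix p assume hp: "p \<in> ({0..1} \<times> closed_cell S \<sigma>) \<inter> H -` W"
        then have p1: "p \<in> {0..1} \<times> closed_cell S \<sigma>" and p2: "H p \<in> W" by auto
        have "H p \<in> region T \<tau>" using \<tau>(2) p1 by blast
        then have "H p \<in> U" using W(2) p2 by blast
        moreover have "p \<in> {0..1} \<times> realization_points S" using p1 cell_sub_rp[of S \<sigma>] by blast
        ultimately have "p \<in> {0..1} \<times> realization_points S \<and> H p \<in> U" by blast
        then show "p \<in> ?P \<inter> ({0..1} \<times> closed_cell S \<sigma>)" using p1 top by blast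
      qed
      moreover have "openin (top_of_set ({0..1} \<times> closed_cell S \<sigma>)) (({0..1} \<times> closed_cell S \<sigma>) \<inter> H -` W)"
        using continuous_openin_preimage_gen[OF \<tau>(3) W(1)] .
      ultimately show "openin (top_of_set ({0..1} \<times> closed_cell S \<sigma>)) (?P \<inter> ({0..1} \<times> closed_cell S \<sigma>))"
        by (simp only:)
    qed
  qed
qed



definition Cb :: "('a::order \<Rightarrow> real) \<Rightarrow> 'a \<Rightarrow> real" where
  "Cb \<alpha> z = (\<Sum>w\<in>{w. \<alpha> w \<noteq> 0 \<and> w < z}. \<alpha> w)"

definition lowp :: "real \<Rightarrow> ('a::order \<Rightarrow> real) \<Rightarrow> 'a \<Rightarrow> real" where
  "lowp s \<alpha> z = min (\<alpha> z) (max 0 (s - Cb \<alpha> z))"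

definition Hm :: "('a::order \<Rightarrow> 'b) \<Rightarrow> ('a \<Rightarrow> 'b) \<Rightarrow> real \<times> ('a \<Rightarrow> real) \<Rightarrow> ('b \<Rightarrow> real)" where
  "Hm g h p = (\<lambda>w. \<Sum>z\<in>{z. snd p z \<noteq> 0}.
      (if g z = w then lowp (fst p) (snd p) z else 0) + (if h z = w then snd p z - lowp (fst p) (snd p) z else 0))"

definition ind :: "('a \<Rightarrow> 'b) \<Rightarrow> ('a \<Rightarrow> real) \<Rightarrow> ('b \<Rightarrow> real)" where
  "ind g \<alpha> = (\<lambda>w. \<Sum>z\<in>{z. \<alpha> z \<noteq> 0}. if g z = w then \<alpha> z else 0)"

definition ls :: "'a::order set \<Rightarrow> real \<Rightarrow> ('a \<Rightarrow> real) \<Rightarrow> 'a \<Rightarrow> real" where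
  "ls \<sigma> s \<alpha> z = min (\<alpha> z) (max 0 (s - (\<Sum>w\<in>{w\<in>\<sigma>. w < z}. \<alpha> w)))"

definition Hs :: "'a::order set \<Rightarrow> ('a \<Rightarrow> 'b) \<Rightarrow> ('a \<Rightarrow> 'b) \<Rightarrow> real \<times> ('a \<Rightarrow> real) \<Rightarrow> ('b \<Rightarrow> real)" where
  "Hs \<sigma> g h p = (\<lambda>w. \<Sum>z\<in>\<sigma>.
      (if g z = w then ls \<sigma> (fst p) (snd p) z else 0) + (if h z = w then snd p z - ls \<sigma> (fst p) (snd p) z else 0))"

lemma Hm_gg: "Hm g g p = ind g (snd p)"
  unfolding Hm_def ind_def by (intro ext sum.cong) auto

lemma cell_facts:
  assumes "is_simplex S \<sigma>" "\<alpha> \<in> closed_cell S \<sigma>"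
  shows "{z. \<alpha> z \<noteq> 0} \<subseteq> \<sigma>" "finite \<sigma>" "\<alpha> \<in> realization_points S"
  using assms unfolding closed_cell_def is_simplex_def by auto

lemma Hm_cell:
  assumes s: "is_simplex S \<sigma>" and a: "\<alpha> \<in> closed_cell S \<sigma>"
  shows "Hm g h (t, \<alpha>) = Hs \<sigma> g h (t, \<alpha>)"
proof -
  have sub: "{z. \<alpha> z \<noteq> 0} \<subseteq> \<sigma>" and fin: "finite \<sigma>" using cell_facts[OF s a] by auto
  have cb: "Cb \<alpha> z = (\<Sum>w\<in>{w\<in>\<sigma>. w < z}. \<alpha> w)" for z
    unfolding Cb_def
  proof (rule sum.mono_neutral_left)
    show "finite {w \<in> \<sigma>. w < z}" using fin by simp
    show "{w. \<alpha> w \<noteq> 0 \<and> w < z} \<subseteq> {w \<in> \<sigma>. w < z}" using sub by blast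
    show "\<forall>i\<in>{w \<in> \<sigma>. w < z} - {w. \<alpha> w \<noteq> 0 \<and> w < z}. \<alpha> i = 0" by blast
  qed
  have l: "lowp t \<alpha> z = ls \<sigma> t \<alpha> z" for z unfolding lowp_def ls_def cb ..
  show ?thesis
    unfolding Hm_def Hs_def fst_conv snd_conv l
  proof (rule ext, rule sum.mono_neutral_left)
    fix w
    show "finite \<sigma>" by (rule fin)
    show "{z. \<alpha> z \<noteq> 0} \<subseteq> \<sigma>" by (rule sub)
    show "\<forall>i\<in>\<sigma> - {z. \<alpha> z \<noteq> 0}. (if g i = w then ls \<sigma> t \<alpha> i else 0) + (if h i = w then \<alpha> i - ls \<sigma> t \<alpha> i else 0) = 0"
      by (simp add: ls_def)
  qed
qed

lemma snd_coord [continuous_intros]: "continuous_on A (\<lambda>p::'c::topological_space \<times> ('a \<Rightarrow> real). snd p z)"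
proof -
  have "continuous_on UNIV ((\<lambda>\<alpha>::'a \<Rightarrow> real. \<alpha> z) \<circ> snd)"
    by (intro continuous_on_compose continuous_on_snd continuous_on_id) (simp add: coord_cont)
  then have "continuous_on UNIV (\<lambda>p::'c \<times> ('a \<Rightarrow> real). snd p z)" by (simp add: o_def)
  then show ?thesis by (rule continuous_on_subset) simp
qed

lemma Hs_cont: "continuous_on A (Hs \<sigma> g h)"
  unfolding Hs_def
proof (rule continuous_on_coordinatewise_then_product)
  fix w
  have c: "continuous_on A (\<lambda>p. ls \<sigma> (fst p) (snd p) z)" for z
    unfolding ls_def by (intro continuous_intros)
  show "continuous_on A (\<lambda>p. \<Sum>z\<in>\<sigma>. (if g z = w then ls \<sigma> (fst p) (snd p) z else 0) +
          (if h z = w then snd p z - ls \<sigma> (fst p) (snd p) z else 0))"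
  proof (intro continuous_on_sum continuous_on_add)
    fix z
    show "continuous_on A (\<lambda>p. if g z = w then ls \<sigma> (fst p) (snd p) z else 0)"
      using c by (cases "g z = w") simp_all
    show "continuous_on A (\<lambda>p. if h z = w then snd p z - ls \<sigma> (fst p) (snd p) z else 0)"
      using c by (cases "h z = w") (simp_all add: continuous_on_diff snd_coord)
  qed
qed



lemma lowp_bounds:
  assumes "0 \<le> \<alpha> z"
  shows "0 \<le> lowp t \<alpha> z" "lowp t \<alpha> z \<le> \<alpha> z"
  using assms unfolding lowp_def by auto

lemma Hm_region:
  fixes g h :: "'a::order \<Rightarrow> 'b::order"
  assumes gm: "\<And>a b. a \<in> S \<Longrightarrow> b \<in> S \<Longrightarrow> a \<le> b \<Longrightarrow> g a \<le> g b"
    and hm: "\<And>a b. a \<in> S \<Longrightarrow> b \<in> S \<Longrightarrow> a \<le> b \<Longrightarrow> h a \<le> h b"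
    and gT: "\<And>a. a \<in> S \<Longrightarrow> g a \<in> T" and hT: "\<And>a. a \<in> S \<Longrightarrow> h a \<in> T"
    and gh: "\<And>a. a \<in> S \<Longrightarrow> g a \<le> h a"
    and s: "is_simplex S \<sigma>" and a: "\<alpha> \<in> closed_cell S \<sigma>"
  shows "Hm g h (t, \<alpha>) \<in> region T (g ` \<sigma> \<union> h ` \<sigma>)"
proof -
  define A where "A = {z. \<alpha> z \<noteq> 0}"
  have rp: "\<alpha> \<in> realization_points S" using cell_facts[OF s a] by simp
  have Asig: "A \<subseteq> \<sigma>" using cell_facts[OF s a] A_def by simp
  have nn: "\<And>z. 0 \<le> \<alpha> z" and Asimp: "is_simplex S A" and A1: "sum \<alpha> A = 1"
    using rp unfolding realization_points_def A_def by auto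
  have finA: "finite A" and AS: "A \<subseteq> S" and chain: "\<And>a b. a \<in> A \<Longrightarrow> b \<in> A \<Longrightarrow> a \<le> b \<or> b \<le> a"
    using Asimp unfolding is_simplex_def by auto
  define L where "L z = lowp t \<alpha> z" for z
  have L0: "0 \<le> L z" and La: "L z \<le> \<alpha> z" for z using lowp_bounds[of \<alpha> z t, OF nn] L_def by auto
  define \<beta> where "\<beta> = Hm g h (t, \<alpha>)"
  have \<beta>: "\<beta> w = (\<Sum>z\<in>A. (if g z = w then L z else 0) + (if h z = w then \<alpha> z - L z else 0))" for w
    unfolding \<beta>_def Hm_def A_def L_def fst_conv snd_conv ..
  have \<beta>nn: "0 \<le> \<beta> w" for w
    unfolding \<beta> using L0 La by (intro sum_nonneg) (simp add: add_nonneg_nonneg)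
  have supp: "\<exists>z\<in>A. (g z = w \<and> L z \<noteq> 0) \<or> (h z = w \<and> \<alpha> z - L z \<noteq> 0)" if "\<beta> w \<noteq> 0" for w
  proof (rule ccontr)
    assume "\<not> ?thesis"
    then have "\<forall>z\<in>A. (if g z = w then L z else 0) + (if h z = w then \<alpha> z - L z else 0) = 0" by auto
    then have "\<beta> w = 0" unfolding \<beta> by (rule sum.neutral)
    with that show False by simp
  qed
  have Cb_mono: "Cb \<alpha> b + \<alpha> b \<le> Cb \<alpha> a" if "b \<in> A" "b < a" for a b
  proof -
    have fin1: "finite {w. \<alpha> w \<noteq> 0 \<and> w < a}" using finA unfolding A_def by (rule finite_subset[rotated]) auto
    have d: "{w. \<alpha> w \<noteq> 0 \<and> w < b} \<inter> {b} = {}" by auto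
    have "Cb \<alpha> b + \<alpha> b = sum \<alpha> ({w. \<alpha> w \<noteq> 0 \<and> w < b} \<union> {b})"
      unfolding Cb_def using fin1 that
      by (subst sum.union_disjoint) (auto intro: finite_subset[OF _ fin1] dest: order.strict_trans)
    also have "\<dots> \<le> sum \<alpha> {w. \<alpha> w \<noteq> 0 \<and> w < a}"
    proof (rule sum_mono2[OF fin1])
      show "{w. \<alpha> w \<noteq> 0 \<and> w < b} \<union> {b} \<subseteq> {w. \<alpha> w \<noteq> 0 \<and> w < a}"
        using that unfolding A_def by (auto dest: order.strict_trans)
      show "\<And>x. x \<in> {w. \<alpha> w \<noteq> 0 \<and> w < a} - ({w. \<alpha> w \<noteq> 0 \<and> w < b} \<union> {b}) \<Longrightarrow> 0 \<le> \<alpha> x"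
        using nn by blast
    qed
    finally show ?thesis unfolding Cb_def .
  qed
  have key: "a \<le> b" if "a \<in> A" "b \<in> A" "L a \<noteq> 0" "\<alpha> b - L b \<noteq> 0" for a b
  proof (rule ccontr)
    assume nab: "\<not> a \<le> b"
    then have ba: "b < a" using chain[OF that(1,2)] by (auto simp: less_le)
    have c1: "t > Cb \<alpha> a"
    proof (rule ccontr)
      assume "\<not> t > Cb \<alpha> a"
      then have "max 0 (t - Cb \<alpha> a) = 0" by simp
      then have "L a = 0" unfolding L_def lowp_def using nn[of a] by simp
      with that(3) show False by simp
    qed
    have c2: "t - Cb \<alpha> b < \<alpha> b"
    proof (rule ccontr)
      assume "\<not> t - Cb \<alpha> b < \<alpha> b"
      then have "L b = \<alpha> b" unfolding L_def lowp_def by simp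
      with that(4) show False by simp
    qed
    show False using Cb_mono[OF that(2) ba] c1 c2 by simp
  qed
  have \<beta>supp: "{w. \<beta> w \<noteq> 0} \<subseteq> g ` A \<union> h ` A"
  proof
    fix w assume "w \<in> {w. \<beta> w \<noteq> 0}"
    then obtain z where "z \<in> A" "(g z = w \<and> L z \<noteq> 0) \<or> (h z = w \<and> \<alpha> z - L z \<noteq> 0)" using supp by auto
    then show "w \<in> g ` A \<union> h ` A" by auto
  qed
  have finB: "finite (g ` A \<union> h ` A)" using finA by simp
  have sum1: "(\<Sum>w\<in>{w. \<beta> w \<noteq> 0}. \<beta> w) = 1"
  proof -
    have "(\<Sum>w\<in>{w. \<beta> w \<noteq> 0}. \<beta> w) = (\<Sum>w\<in>g ` A \<union> h ` A. \<beta> w)"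
      using finB \<beta>supp by (intro sum.mono_neutral_left) auto
    also have "\<dots> = (\<Sum>z\<in>A. \<Sum>w\<in>g ` A \<union> h ` A. (if g z = w then L z else 0) + (if h z = w then \<alpha> z - L z else 0))"
      unfolding \<beta> by (rule sum.swap)
    also have "\<dots> = (\<Sum>z\<in>A. \<alpha> z)"
    proof (rule sum.cong[OF refl])
      fix z assume z: "z \<in> A"
      have "(\<Sum>w\<in>g ` A \<union> h ` A. (if g z = w then L z else 0) + (if h z = w then \<alpha> z - L z else 0))
          = (\<Sum>w\<in>g ` A \<union> h ` A. (if g z = w then L z else 0)) + (\<Sum>w\<in>g ` A \<union> h ` A. (if h z = w then \<alpha> z - L z else 0))"
        by (rule sum.distrib)
      also have "\<dots> = L z + (\<alpha> z - L z)"
        using z finB by (simp add: sum.delta)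
      finally show "(\<Sum>w\<in>g ` A \<union> h ` A. (if g z = w then L z else 0) + (if h z = w then \<alpha> z - L z else 0)) = \<alpha> z"
        by simp
    qed
    finally show ?thesis using A1 by simp
  qed
  have ne: "{w. \<beta> w \<noteq> 0} \<noteq> {}"
  proof
    assume "{w. \<beta> w \<noteq> 0} = {}"
    then have "(\<Sum>w\<in>{w. \<beta> w \<noteq> 0}. \<beta> w) = 0" by (simp only: sum.empty)
    with sum1 show False by simp
  qed
  have inT: "{w. \<beta> w \<noteq> 0} \<subseteq> T"
  proof
    fix w assume "w \<in> {w. \<beta> w \<noteq> 0}"
    then have "w \<in> g ` A \<union> h ` A" using \<beta>supp by blast
    then show "w \<in> T" using AS gT hT by blast
  qed
  have ch: "w1 \<le> w2 \<or> w2 \<le> w1" if hw1: "\<beta> w1 \<noteq> 0" and hw2: "\<beta> w2 \<noteq> 0" for w1 w2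
  proof -
    obtain a where a: "a \<in> A" "(g a = w1 \<and> L a \<noteq> 0) \<or> (h a = w1 \<and> \<alpha> a - L a \<noteq> 0)" using supp[OF hw1] by blast
    obtain b where b: "b \<in> A" "(g b = w2 \<and> L b \<noteq> 0) \<or> (h b = w2 \<and> \<alpha> b - L b \<noteq> 0)" using supp[OF hw2] by blast
    have aS: "a \<in> S" and bS: "b \<in> S" using a(1) b(1) AS by auto
    have gg: "g a \<le> g b \<or> g b \<le> g a" using chain[OF a(1) b(1)] gm[OF aS bS] gm[OF bS aS] by blast
    have hh: "h a \<le> h b \<or> h b \<le> h a" using chain[OF a(1) b(1)] hm[OF aS bS] hm[OF bS aS] by blast
    have gh1: "g a \<le> h b" if "L a \<noteq> 0" "\<alpha> b - L b \<noteq> 0"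
    proof -
      have "a \<le> b" using key[OF a(1) b(1) that] .
      then have "g a \<le> g b" using gm[OF aS bS] by simp
      also have "g b \<le> h b" using gh[OF bS] .
      finally show ?thesis .
    qed
    have gh2: "g b \<le> h a" if "L b \<noteq> 0" "\<alpha> a - L a \<noteq> 0"
    proof -
      have "b \<le> a" using key[OF b(1) a(1) that] .
      then have "g b \<le> g a" using gm[OF bS aS] by simp
      also have "g a \<le> h a" using gh[OF aS] .
      finally show ?thesis .
    qed
    show ?thesis using a(2) b(2) gg hh gh1 gh2 by auto
  qed
  have "\<beta> \<in> realization_points T"
    unfolding realization_points_def is_simplex_def
  proof (intro CollectI conjI allI ballI)
    show "\<And>z. 0 \<le> \<beta> z" by (rule \<beta>nn)
    show "finite {z. \<beta> z \<noteq> 0}" using finB \<beta>supp by (rule finite_subset[rotated])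
    show "{z. \<beta> z \<noteq> 0} \<noteq> {}" by (rule ne)
    show "{z. \<beta> z \<noteq> 0} \<subseteq> T" by (rule inT)
    show "(\<Sum>z\<in>{z. \<beta> z \<noteq> 0}. \<beta> z) = 1" by (rule sum1)
    fix a b assume "a \<in> {z. \<beta> z \<noteq> 0}" "b \<in> {z. \<beta> z \<noteq> 0}"
    then show "a \<le> b \<or> b \<le> a" using ch by simp
  qed
  moreover have "{w. \<beta> w \<noteq> 0} \<subseteq> g ` \<sigma> \<union> h ` \<sigma>" using \<beta>supp Asig by blast
  ultimately show ?thesis unfolding region_def \<beta>_def by simp
qed



lemma rp_facts:
  assumes "\<alpha> \<in> realization_points S"
  shows "\<And>z. 0 \<le> \<alpha> z" "finite {z. \<alpha> z \<noteq> 0}" "(\<Sum>z\<in>{z. \<alpha> z \<noteq> 0}. \<alpha> z) = 1"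
  using assms unfolding realization_points_def is_simplex_def by auto

lemma Cb_nonneg: "(\<And>z. 0 \<le> \<alpha> z) \<Longrightarrow> 0 \<le> Cb \<alpha> z"
  unfolding Cb_def by (intro sum_nonneg) auto

lemma Hm_0:
  assumes "\<alpha> \<in> realization_points S"
  shows "Hm g h (0, \<alpha>) = ind h \<alpha>"
proof -
  have l: "lowp 0 \<alpha> z = 0" for z
    using Cb_nonneg[of \<alpha> z, OF rp_facts(1)[OF assms]] rp_facts(1)[OF assms, of z]
    unfolding lowp_def by simp
  show ?thesis unfolding Hm_def ind_def fst_conv snd_conv l
    by (intro ext sum.cong) auto
qed

lemma Hm_1:
  assumes "\<alpha> \<in> realization_points S"
  shows "Hm g h (1, \<alpha>) = ind g \<alpha>"
proof -
  note nn = rp_facts(1)[OF assms] and fin = rp_facts(2)[OF assms] and one = rp_facts(3)[OF assms]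
  have l: "lowp 1 \<alpha> z = \<alpha> z" if z: "\<alpha> z \<noteq> 0" for z
  proof -
    have fin1: "finite {w. \<alpha> w \<noteq> 0 \<and> w < z}" using fin by (rule finite_subset[rotated]) auto
    have "Cb \<alpha> z + \<alpha> z = sum \<alpha> ({w. \<alpha> w \<noteq> 0 \<and> w < z} \<union> {z})"
      unfolding Cb_def using fin1 by (subst sum.union_disjoint) auto
    also have "\<dots> \<le> sum \<alpha> {w. \<alpha> w \<noteq> 0}"
    proof (rule sum_mono2[OF fin])
      show "{w. \<alpha> w \<noteq> 0 \<and> w < z} \<union> {z} \<subseteq> {w. \<alpha> w \<noteq> 0}" using z by auto
      show "\<And>x. x \<in> {w. \<alpha> w \<noteq> 0} - ({w. \<alpha> w \<noteq> 0 \<and> w < z} \<union> {z}) \<Longrightarrow> 0 \<le> \<alpha> x"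
        using nn by blast
    qed
    finally have "Cb \<alpha> z + \<alpha> z \<le> 1" using one by simp
    then show ?thesis unfolding lowp_def using nn[of z] by simp
  qed
  show ?thesis unfolding Hm_def ind_def fst_conv snd_conv
    by (intro ext sum.cong) (auto simp: l)
qed

lemma Hm_cont:
  fixes g h :: "'a::order \<Rightarrow> 'b::order"
  assumes gm: "\<And>a b. a \<in> S \<Longrightarrow> b \<in> S \<Longrightarrow> a \<le> b \<Longrightarrow> g a \<le> g b"
    and hm: "\<And>a b. a \<in> S \<Longrightarrow> b \<in> S \<Longrightarrow> a \<le> b \<Longrightarrow> h a \<le> h b"
    and gT: "\<And>a. a \<in> S \<Longrightarrow> g a \<in> T" and hT: "\<And>a. a \<in> S \<Longrightarrow> h a \<in> T"
    and gh: "\<And>a. a \<in> S \<Longrightarrow> g a \<le> h a"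
  shows "continuous_map (prod_topology (top_of_set {0..1}) (order_realization S)) (order_realization T) (Hm g h)"
proof (rule cont_criterion)
  fix \<sigma> assume s: "is_simplex S \<sigma>"
  show "\<exists>\<tau>. finite \<tau> \<and> Hm g h ` ({0..1} \<times> closed_cell S \<sigma>) \<subseteq> region T \<tau> \<and>
          continuous_on ({0..1} \<times> closed_cell S \<sigma>) (Hm g h)"
  proof (intro exI conjI)
    show "finite (g ` \<sigma> \<union> h ` \<sigma>)" using s unfolding is_simplex_def by simp
    show "Hm g h ` ({0..1} \<times> closed_cell S \<sigma>) \<subseteq> region T (g ` \<sigma> \<union> h ` \<sigma>)"
    proof
      fix q assume "q \<in> Hm g h ` ({0..1} \<times> closed_cell S \<sigma>)"
      then obtain t \<alpha> where q: "q = Hm g h (t, \<alpha>)" "\<alpha> \<in> closed_cell S \<sigma>" by blast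
      show "q \<in> region T (g ` \<sigma> \<union> h ` \<sigma>)" unfolding q(1)
        by (rule Hm_region[OF gm hm gT hT gh s q(2)])
    qed
    show "continuous_on ({0..1} \<times> closed_cell S \<sigma>) (Hm g h)"
    proof (rule continuous_on_eq[OF Hs_cont])
      fix p :: "real \<times> ('a \<Rightarrow> real)" assume "p \<in> {0..1} \<times> closed_cell S \<sigma>"
      then obtain t \<alpha> where p: "p = (t, \<alpha>)" "\<alpha> \<in> closed_cell S \<sigma>" by blast
      show "Hs \<sigma> g h p = Hm g h p" unfolding p(1) using Hm_cell[OF s p(2), of g h t] by (rule sym)
    qed
  qed
qed

lemma ind_cont:
  fixes g :: "'a::order \<Rightarrow> 'b::order"
  assumes gm: "\<And>a b. a \<in> S \<Longrightarrow> b \<in> S \<Longrightarrow> a \<le> b \<Longrightarrow> g a \<le> g b"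
    and gT: "\<And>a. a \<in> S \<Longrightarrow> g a \<in> T"
  shows "continuous_map (order_realization S) (order_realization T) (ind g)"
proof -
  have c1: "continuous_map (prod_topology (top_of_set {0..1}) (order_realization S)) (order_realization T) (Hm g g)"
    by (rule Hm_cont[OF gm gm gT gT order_refl])
  have c2: "continuous_map (order_realization S) (prod_topology (top_of_set {0..1::real}) (order_realization S)) (\<lambda>\<alpha>. (0, \<alpha>))"
    unfolding continuous_map_pairwise by (simp add: o_def)
  have "continuous_map (order_realization S) (order_realization T) (Hm g g \<circ> (\<lambda>\<alpha>. (0, \<alpha>)))"
    by (rule continuous_map_compose[OF c2 c1])
  moreover have "Hm g g \<circ> (\<lambda>\<alpha>. (0, \<alpha>)) = ind g" by (rule ext) (simp add: Hm_gg)
  ultimately show ?thesis by simp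
qed

lemma ind_homot:
  fixes g h :: "'a::order \<Rightarrow> 'b::order"
  assumes gm: "\<And>a b. a \<in> S \<Longrightarrow> b \<in> S \<Longrightarrow> a \<le> b \<Longrightarrow> g a \<le> g b"
    and hm: "\<And>a b. a \<in> S \<Longrightarrow> b \<in> S \<Longrightarrow> a \<le> b \<Longrightarrow> h a \<le> h b"
    and gT: "\<And>a. a \<in> S \<Longrightarrow> g a \<in> T" and hT: "\<And>a. a \<in> S \<Longrightarrow> h a \<in> T"
    and gh: "\<And>a. a \<in> S \<Longrightarrow> g a \<le> h a"
  shows "homotopic_with (\<lambda>_. True) (order_realization S) (order_realization T) (ind h) (ind g)"
  unfolding homotopic_with[where P = "\<lambda>_. True", simplified]
proof (intro exI conjI ballI)
  show "continuous_map (prod_topology (top_of_set {0..1}) (order_realization S)) (order_realization T) (Hm g h)"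
    by (rule Hm_cont[OF gm hm gT hT gh])
  fix \<alpha> assume "\<alpha> \<in> topspace (order_realization S)"
  then have a: "\<alpha> \<in> realization_points S" by (simp add: topspace_OR)
  show "Hm g h (0, \<alpha>) = ind h \<alpha>" by (rule Hm_0[OF a])
  show "Hm g h (1, \<alpha>) = ind g \<alpha>" by (rule Hm_1[OF a])
qed

lemma ind_id:
  assumes "\<beta> \<in> realization_points S"
  shows "ind (\<lambda>z. z) \<beta> = \<beta>"
proof
  fix w
  have "(\<Sum>z\<in>{z. \<beta> z \<noteq> 0}. if z = w then \<beta> z else 0) = (if w \<in> {z. \<beta> z \<noteq> 0} then \<beta> w else 0)"
    using rp_facts(2)[OF assms] by (rule sum.delta)
  then show "ind (\<lambda>z. z) \<beta> w = \<beta> w" unfolding ind_def by auto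
qed

lemma ind_fix:
  assumes "\<beta> \<in> realization_points S" "\<And>z. \<beta> z \<noteq> 0 \<Longrightarrow> f z = z"
  shows "ind f \<beta> = \<beta>"
proof -
  have "ind f \<beta> = ind (\<lambda>z. z) \<beta>" unfolding ind_def using assms(2) by (intro ext sum.cong) auto
  then show ?thesis using ind_id[OF assms(1)] by simp
qed

lemma ind_const:
  assumes "\<beta> \<in> realization_points S"
  shows "ind (\<lambda>_. c) \<beta> = (\<lambda>w. if w = c then 1 else 0)"
  unfolding ind_def using rp_facts(3)[OF assms] by (intro ext) auto



theorem lemma2p7:
  fixes f :: "'a::order \<Rightarrow> 'a" and x y :: 'a
  assumes "mono f"
    and "\<And>z. f z \<le> z"
    and "f \<circ> f = f"
    and "x < y"
    and "f -` {x} = {x}"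
  shows "(y \<in> Fix f \<longrightarrow>
           order_realization {x<..<y} homotopy_equivalent_space
           order_realization ({x<..<y} \<inter> Fix f))
       \<and> (y \<notin> Fix f \<longrightarrow>
           order_realization {x<..<y} homotopy_equivalent_space discrete_topology {()})"
proof -
  note mono = assms(1) and dec = assms(2) and idem = assms(3) and xy = assms(4) and pre = assms(5)
  define S where "S = {x<..<y}"
  have fm: "\<And>a b. a \<le> b \<Longrightarrow> f a \<le> f b" using mono by (simp add: monoD)
  have fx: "f x = x" using pre by auto
  have ff: "f (f z) = f z" for z using fun_cong[OF idem, of z] by simp
  have fgt: "x < f z" if "x < z" for z
  proof -
    have "f x \<le> f z" using fm that by simp
    then have "x \<le> f z" using fx by simp
    moreover have "f z \<noteq> x"
    proof
      assume "f z = x"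
      then have "z \<in> f -` {x}" by simp
      then have "z = x" using pre by simp
      with that show False by simp
    qed
    ultimately show ?thesis by simp
  qed
  have fS: "f z \<in> S" if "z \<in> S" for z
    using that fgt dec[of z] unfolding S_def by (auto intro: le_less_trans)
  have idc: "continuous_map (order_realization S) (order_realization S) (ind (\<lambda>z. z))"
    by (rule ind_cont) auto
  have e2: "homotopic_with (\<lambda>_. True) (order_realization S) (order_realization S) (ind (\<lambda>z. z)) id"
    by (rule homotopic_with_equal) (auto simp: idc topspace_OR ind_id)
  have hA: "homotopic_with (\<lambda>_. True) (order_realization S) (order_realization S) (ind (\<lambda>z. z)) (ind f)"
    by (rule ind_homot) (auto simp: fm fS dec)
  show ?thesis
  proof (intro conjI impI)
    assume yF: "y \<in> Fix f"
    define S' where "S' = S \<inter> Fix f"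
    have cF: "continuous_map (order_realization S) (order_realization S') (ind f)"
      by (rule ind_cont) (auto simp: fm fS S'_def Fix_def ff)
    have cG: "continuous_map (order_realization S') (order_realization S) (ind (\<lambda>z. z))"
      by (rule ind_cont) (auto simp: S'_def)
    have H1: "homotopic_with (\<lambda>_. True) (order_realization S) (order_realization S) (ind (\<lambda>z. z) \<circ> ind f) id"
    proof -
      have e1: "homotopic_with (\<lambda>_. True) (order_realization S) (order_realization S) (ind (\<lambda>z. z) \<circ> ind f) (ind f)"
      proof (rule homotopic_with_equal)
        show "continuous_map (order_realization S) (order_realization S) (ind (\<lambda>z. z) \<circ> ind f)"
          by (rule continuous_map_compose[OF cF cG])
        fix \<alpha> assume "\<alpha> \<in> topspace (order_realization S)"
        then have "ind f \<alpha> \<in> topspace (order_realization S')"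
          using cF by (rule continuous_map_image_subset_topspace[THEN subsetD, OF _ imageI, rotated])
        then have "ind f \<alpha> \<in> realization_points S'" by (simp add: topspace_OR)
        then show "(ind (\<lambda>z. z) \<circ> ind f) \<alpha> = ind f \<alpha>" by (simp add: ind_id)
      qed auto
      show ?thesis
        using homotopic_with_trans[OF e1 homotopic_with_trans[OF homotopic_with_symD[OF hA] e2]] .
    qed
    have H2: "homotopic_with (\<lambda>_. True) (order_realization S') (order_realization S') (ind f \<circ> ind (\<lambda>z. z)) id"
    proof (rule homotopic_with_equal)
      show "continuous_map (order_realization S') (order_realization S') (ind f \<circ> ind (\<lambda>z. z))"
        by (rule continuous_map_compose[OF cG cF])
      fix \<beta> assume "\<beta> \<in> topspace (order_realization S')"
      then have b: "\<beta> \<in> realization_points S'" by (simp add: topspace_OR)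
      have "\<And>z. \<beta> z \<noteq> 0 \<Longrightarrow> f z = z"
        using b unfolding realization_points_def is_simplex_def S'_def Fix_def by auto
      then show "(ind f \<circ> ind (\<lambda>z. z)) \<beta> = id \<beta>"
        using ind_id[OF b] ind_fix[OF b] by simp
    qed auto
    show "order_realization {x<..<y} homotopy_equivalent_space order_realization ({x<..<y} \<inter> Fix f)"
      unfolding homotopy_equivalent_space_def S_def[symmetric] S'_def[symmetric]
      using cF cG H1 H2 by blast
  next
    assume yF: "y \<notin> Fix f"
    define c where "c = f y"
    have cS: "c \<in> S"
    proof -
      have "f y \<noteq> y" using yF by (simp add: Fix_def)
      then have "f y < y" using dec[of y] by simp
      then show ?thesis using fgt[OF xy] unfolding S_def c_def by simp
    qed
    define \<delta> where "\<delta> = (\<lambda>w. if w = c then 1 else (0::real))"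
    have supp\<delta>: "{z. \<delta> z \<noteq> 0} = {c}" unfolding \<delta>_def by auto
    have \<delta>rp: "\<delta> \<in> realization_points S"
      unfolding realization_points_def is_simplex_def supp\<delta> using cS by (auto simp: \<delta>_def)
    have hB: "homotopic_with (\<lambda>_. True) (order_realization S) (order_realization S) (ind (\<lambda>_. c)) (ind f)"
    proof (rule ind_homot)
      fix a assume "a \<in> S"
      then have "a \<le> y" unfolding S_def by (simp add: less_imp_le)
      then show "f a \<le> c" unfolding c_def by (rule fm)
    qed (auto simp: fm fS cS)
    have e3: "homotopic_with (\<lambda>_. True) (order_realization S) (order_realization S) (\<lambda>_. \<delta>) (ind (\<lambda>_. c))"
    proof (rule homotopic_with_equal)
      show "continuous_map (order_realization S) (order_realization S) (\<lambda>_. \<delta>)"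
        using \<delta>rp by (simp add: topspace_OR)
      fix \<alpha> assume "\<alpha> \<in> topspace (order_realization S)"
      then have "\<alpha> \<in> realization_points S" by (simp add: topspace_OR)
      then show "\<delta> = ind (\<lambda>_. c) \<alpha>" unfolding \<delta>_def by (rule ind_const[symmetric])
    qed auto
    have H1: "homotopic_with (\<lambda>_. True) (order_realization S) (order_realization S) ((\<lambda>_. \<delta>) \<circ> (\<lambda>_. ())) id"
    proof -
      have "(\<lambda>_. \<delta>) \<circ> (\<lambda>_. ()) = (\<lambda>_. \<delta>)" by (simp add: o_def)
      moreover have "homotopic_with (\<lambda>_. True) (order_realization S) (order_realization S) (\<lambda>_. \<delta>) id"
        using homotopic_with_trans[OF e3 homotopic_with_trans[OF hB homotopic_with_trans[OF homotopic_with_symD[OF hA] e2]]] .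
      ultimately show ?thesis by simp
    qed
    have H2: "homotopic_with (\<lambda>_. True) (discrete_topology {()}) (discrete_topology {()}) ((\<lambda>_. ()) \<circ> (\<lambda>_. \<delta>)) id"
      by (rule homotopic_with_equal) auto
    have cF: "continuous_map (order_realization S) (discrete_topology {()}) (\<lambda>_. ())" by simp
    have cG: "continuous_map (discrete_topology {()}) (order_realization S) (\<lambda>_. \<delta>)"
      using \<delta>rp by (simp add: topspace_OR)
    show "order_realization {x<..<y} homotopy_equivalent_space discrete_topology {()}"
      unfolding homotopy_equivalent_space_def S_def[symmetric]
      using cF cG H1 H2 by blast
  qed
qed

end
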